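(* Let $S\in(0,\infty]$ and let $\eta(t)$ and $H^n(t)$, $n\ge1$, be real-valued (jointly measurable) random processes with $\int_0^S\eta(t)^2\,dt<\infty$ a.s. and $\limsup_{n\to\infty}\int_0^S H^n(t)^2\,dt<\infty$ a.s. Suppose that $$\sup_{0\le t\le S}\Big|\int_0^t H^n\,ds\Big|\to_p 0,\qquad n\to\infty.$$ Then $$\sup_{0\le t\le S}\Big|\int_0^t H^n\eta\,ds\Big|\to_p 0,\qquad n\to\infty.$$
   Context: $\to_p$ denotes convergence in probability. *)

theory Defs
  imports "HOL-Probability.Probability"
begin

definition time_dom :: "ereal \<Rightarrow> real set" where
  "time_dom S = {t. 0 \<le> t \<and> ereal t \<le> S}"

text \<open>Convergence in probability to 0 of extended-real random variables, stated with
  outer probability (so no measurability of the events is presupposed).\<close>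
definition conv_prob_zero :: "'a measure \<Rightarrow> (nat \<Rightarrow> 'a \<Rightarrow> ereal) \<Rightarrow> bool" where
  "conv_prob_zero M X \<longleftrightarrow>
     (\<forall>e>0. \<forall>d>0. eventually (\<lambda>n. \<exists>A\<in>sets M.
        {\<omega>\<in>space M. ereal e < \<bar>X n \<omega>\<bar>} \<subseteq> A \<and> measure M A < d) sequentially)"

end

theory Submission
  imports Defs
begin

lemma time_dom_sets[measurable]: "time_dom S \<in> sets borel"
proof -
  have "time_dom S = {t\<in>space borel. 0 \<le> t \<and> ereal t \<le> S}" by (auto simp: time_dom_def)
  also have "\<dots> \<in> sets borel" by measurable
  finally show ?thesis .
qed

lemma time_dom_lborel[measurable]: "time_dom S \<in> sets lborel" by simp

lemma interval_sub_dom: "t \<in> time_dom S \<Longrightarrow> 0 \<le> a \<Longrightarrow> a \<le> t \<Longrightarrow> a \<in> time_dom S"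
proof -
  assume "t \<in> time_dom S" "0 \<le> a" "a \<le> t"
  hence "ereal a \<le> ereal t" "ereal t \<le> S" "0 \<le> a" by (auto simp: time_dom_def)
  thus ?thesis unfolding time_dom_def using order_trans by blast
qed

lemma Icc_sub_dom: "t \<in> time_dom S \<Longrightarrow> {0..t} \<subseteq> time_dom S"
  using interval_sub_dom by auto

lemma prod_bound:
  fixes u v :: "real \<Rightarrow> real"
  assumes [measurable]: "u \<in> borel_measurable lborel" "v \<in> borel_measurable lborel"
    and iu: "set_integrable lborel A (\<lambda>s. (u s)\<^sup>2)" and iv: "set_integrable lborel A (\<lambda>s. (v s)\<^sup>2)"
    and B[measurable]: "B \<in> sets lborel" and BA: "B \<subseteq> A" and A[measurable]: "A \<in> sets lborel" and lam: "l > 0"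
  shows "set_integrable lborel B (\<lambda>s. u s * v s)"
    "\<bar>LINT s:B|lborel. u s * v s\<bar> \<le> (l * (LINT s:A|lborel. (u s)\<^sup>2) + (LINT s:A|lborel. (v s)\<^sup>2) / l) / 2"
proof -
  define q where "q s = (l * (u s)\<^sup>2 + (v s)\<^sup>2 / l) / 2" for s
  have qA: "set_integrable lborel A q" unfolding q_def using iu iv by (intro set_integrable_divide set_integral_add) auto
  have qB: "set_integrable lborel B q" by (rule set_integrable_subset[OF qA B BA])
  have pw: "\<bar>u s * v s\<bar> \<le> q s" for s
  proof -
    have "0 \<le> (l * \<bar>u s\<bar> - \<bar>v s\<bar>)\<^sup>2" by simp
    hence "2 * l * \<bar>u s * v s\<bar> \<le> l * (l * (u s)\<^sup>2 + (v s)\<^sup>2 / l)"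
      using lam by (simp add: power2_eq_square algebra_simps abs_mult)
    hence "l * (2 * \<bar>u s * v s\<bar>) \<le> l * (l * (u s)\<^sup>2 + (v s)\<^sup>2 / l)" by (simp add: algebra_simps)
    hence "2 * \<bar>u s * v s\<bar> \<le> l * (u s)\<^sup>2 + (v s)\<^sup>2 / l" using lam by simp
    thus ?thesis unfolding q_def by simp
  qed
  show uvB: "set_integrable lborel B (\<lambda>s. u s * v s)"
    by (rule set_integrable_bound[OF qB]) (auto simp: set_borel_measurable_def intro: order_trans[OF _ abs_ge_self] order_trans[OF pw])
  have "\<bar>LINT s:B|lborel. u s * v s\<bar> \<le> (LINT s:B|lborel. \<bar>u s * v s\<bar>)"
    unfolding set_lebesgue_integral_def by (rule order_trans[OF integral_abs_bound]) (simp add: abs_mult)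
  also have "\<dots> \<le> (LINT s:B|lborel. q s)"
    by (rule set_integral_mono[OF set_integrable_abs[OF uvB] qB pw])
  also have "\<dots> \<le> (LINT s:A|lborel. q s)"
    unfolding set_lebesgue_integral_def
    apply (rule integral_mono)
    using qB qA BA unfolding set_integrable_def 
    by (auto simp: q_def indicator_def intro!: divide_nonneg_nonneg add_nonneg_nonneg mult_nonneg_nonneg lam[THEN less_imp_le])
  also have "\<dots> = (l * (LINT s:A|lborel. (u s)\<^sup>2) + (LINT s:A|lborel. (v s)\<^sup>2) / l) / 2"
    unfolding q_def using iu iv by simp
  finally show "\<bar>LINT s:B|lborel. u s * v s\<bar> \<le> (l * (LINT s:A|lborel. (u s)\<^sup>2) + (LINT s:A|lborel. (v s)\<^sup>2) / l) / 2" .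
qed

locale dl =
  fixes D :: "real set" and h :: "nat \<Rightarrow> real \<Rightarrow> real" and C :: real
  assumes Dsets[measurable]: "D \<in> sets lborel"
    and Dint: "\<And>t. t \<in> D \<Longrightarrow> {0..t} \<subseteq> D"
    and Dnn: "\<And>t. t \<in> D \<Longrightarrow> 0 \<le> t"
    and hmeas[measurable]: "\<And>n. h n \<in> borel_measurable lborel"
    and hL2: "eventually (\<lambda>n. set_integrable lborel D (\<lambda>s. (h n s)\<^sup>2) \<and> (LINT s:D|lborel. (h n s)\<^sup>2) \<le> C) sequentially"
    and hF: "\<And>e. e > 0 \<Longrightarrow> eventually (\<lambda>n. \<forall>t\<in>D. \<bar>LINT s:{0..t}|lborel. h n s\<bar> \<le> e) sequentially"
begin

definition good :: "(real \<Rightarrow> real) \<Rightarrow> bool" where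
  "good f \<longleftrightarrow> f \<in> borel_measurable lborel \<and> set_integrable lborel D (\<lambda>s. (f s)\<^sup>2) \<and>
     (\<forall>e>0. eventually (\<lambda>n. \<forall>t\<in>D. \<bar>LINT s:{0..t}|lborel. h n s * f s\<bar> \<le> e) sequentially)"

lemma prod_int:
  assumes "set_integrable lborel D (\<lambda>s. (h n s)\<^sup>2)" "f \<in> borel_measurable lborel"
    "set_integrable lborel D (\<lambda>s. (f s)\<^sup>2)" "t \<in> D"
  shows "set_integrable lborel {0..t} (\<lambda>s. h n s * f s)"
  using prod_bound(1)[of "h n" f D "{0..t}" 1] assms Dint Dsets by simp

lemma sq_add_int:
  fixes f g :: "real \<Rightarrow> real"
  assumes [measurable]: "f \<in> borel_measurable lborel" "g \<in> borel_measurable lborel"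
    and "set_integrable lborel D (\<lambda>s. (f s)\<^sup>2)" "set_integrable lborel D (\<lambda>s. (g s)\<^sup>2)"
  shows "set_integrable lborel D (\<lambda>s. (f s + g s)\<^sup>2)"
proof -
  have b: "set_integrable lborel D (\<lambda>s. 2 * (f s)\<^sup>2 + 2 * (g s)\<^sup>2)" using assms by auto
  show ?thesis
  proof (rule set_integrable_bound[OF b])
  show "set_borel_measurable lborel D (\<lambda>s. (f s + g s)\<^sup>2)" unfolding set_borel_measurable_def by measurable
  have "(f s + g s)\<^sup>2 \<le> 2 * (f s)\<^sup>2 + 2 * (g s)\<^sup>2" for s
  proof -
    have "0 \<le> (f s - g s)\<^sup>2" by simp
    thus ?thesis by (simp add: power2_eq_square algebra_simps)
  qed
  thus "AE x in lborel. x \<in> D \<longrightarrow> norm ((f x + g x)\<^sup>2) \<le> norm (2 * (f x)\<^sup>2 + 2 * (g x)\<^sup>2)"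
    by auto
qed
qed

lemma good_zero: "good (\<lambda>s. 0)"
  unfolding good_def by (auto simp: set_integrable_def)

lemma good_add:
  assumes f: "good f" and g: "good g"
  shows "good (\<lambda>s. f s + g s)"
proof -
  have [measurable]: "f \<in> borel_measurable lborel" "g \<in> borel_measurable lborel"
    and fi: "set_integrable lborel D (\<lambda>s. (f s)\<^sup>2)" and gi: "set_integrable lborel D (\<lambda>s. (g s)\<^sup>2)"
    using f g unfolding good_def by auto
  have "eventually (\<lambda>n. \<forall>t\<in>D. \<bar>LINT s:{0..t}|lborel. h n s * (f s + g s)\<bar> \<le> e) sequentially" if e: "e > 0" for e
  proof -
    have "eventually (\<lambda>n. (set_integrable lborel D (\<lambda>s. (h n s)\<^sup>2) \<and> (LINT s:D|lborel. (h n s)\<^sup>2) \<le> C) \<and>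
       (\<forall>t\<in>D. \<bar>LINT s:{0..t}|lborel. h n s * f s\<bar> \<le> e/2) \<and> (\<forall>t\<in>D. \<bar>LINT s:{0..t}|lborel. h n s * g s\<bar> \<le> e/2)) sequentially"
    proof -
      have e2: "e/2 > 0" using e by simp
      have a: "eventually (\<lambda>n. \<forall>t\<in>D. \<bar>LINT s:{0..t}|lborel. h n s * f s\<bar> \<le> e/2) sequentially"
        using f e2 unfolding good_def by blast
      have b: "eventually (\<lambda>n. \<forall>t\<in>D. \<bar>LINT s:{0..t}|lborel. h n s * g s\<bar> \<le> e/2) sequentially"
        using g e2 unfolding good_def by blast
      show ?thesis by (rule eventually_conj[OF hL2 eventually_conj[OF a b]])
    qed
    then show ?thesis
    proof (rule eventually_mono, intro ballI)
      fix n t assume n: "(set_integrable lborel D (\<lambda>s. (h n s)\<^sup>2) \<and> (LINT s:D|lborel. (h n s)\<^sup>2) \<le> C) \<and>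
       (\<forall>t\<in>D. \<bar>LINT s:{0..t}|lborel. h n s * f s\<bar> \<le> e/2) \<and> (\<forall>t\<in>D. \<bar>LINT s:{0..t}|lborel. h n s * g s\<bar> \<le> e/2)"
        and t: "t \<in> D"
      have i1: "set_integrable lborel {0..t} (\<lambda>s. h n s * f s)" using prod_int n fi t by auto
      have i2: "set_integrable lborel {0..t} (\<lambda>s. h n s * g s)" using prod_int n gi t by auto
      have "(LINT s:{0..t}|lborel. h n s * (f s + g s)) = (LINT s:{0..t}|lborel. h n s * f s + h n s * g s)"
        by (simp add: distrib_left)
      also have "\<dots> = (LINT s:{0..t}|lborel. h n s * f s) + (LINT s:{0..t}|lborel. h n s * g s)"
        using i1 i2 by (rule set_integral_add)
      moreover have "\<bar>LINT s:{0..t}|lborel. h n s * f s\<bar> \<le> e/2" "\<bar>LINT s:{0..t}|lborel. h n s * g s\<bar> \<le> e/2"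
        using n t by auto
      ultimately show "\<bar>LINT s:{0..t}|lborel. h n s * (f s + g s)\<bar> \<le> e"
        by linarith
    qed
  qed
  then show ?thesis unfolding good_def using sq_add_int[OF _ _ fi gi] by auto
qed

lemma good_scale:
  assumes f: "good f"
  shows "good (\<lambda>s. c * f s)"
proof -
  have [measurable]: "f \<in> borel_measurable lborel"
    and fi: "set_integrable lborel D (\<lambda>s. (f s)\<^sup>2)"
    using f unfolding good_def by auto
  have "eventually (\<lambda>n. \<forall>t\<in>D. \<bar>LINT s:{0..t}|lborel. h n s * (c * f s)\<bar> \<le> e) sequentially" if e: "e > 0" for e
  proof -
    have "eventually (\<lambda>n. \<forall>t\<in>D. \<bar>LINT s:{0..t}|lborel. h n s * f s\<bar> \<le> e / (\<bar>c\<bar> + 1)) sequentially"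
      using f e unfolding good_def by (auto intro!: divide_pos_pos)
    then show ?thesis
    proof (rule eventually_mono, intro ballI)
      fix n t assume n: "\<forall>t\<in>D. \<bar>LINT s:{0..t}|lborel. h n s * f s\<bar> \<le> e / (\<bar>c\<bar> + 1)" and t: "t \<in> D"
      have "(LINT s:{0..t}|lborel. h n s * (c * f s)) = c * (LINT s:{0..t}|lborel. h n s * f s)"
        by (simp add: mult.left_commute)
      hence "\<bar>LINT s:{0..t}|lborel. h n s * (c * f s)\<bar> = \<bar>c\<bar> * \<bar>LINT s:{0..t}|lborel. h n s * f s\<bar>"
        by (simp add: abs_mult)
      also have "\<dots> \<le> \<bar>c\<bar> * (e / (\<bar>c\<bar> + 1))" using n t by (intro mult_left_mono) auto
      also have "\<dots> \<le> e" using e by (simp add: field_simps)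
      finally show "\<bar>LINT s:{0..t}|lborel. h n s * (c * f s)\<bar> \<le> e" .
    qed
  qed
  moreover have "set_integrable lborel D (\<lambda>s. (c * f s)\<^sup>2)"
    using fi by (simp add: power_mult_distrib)
  ultimately show ?thesis unfolding good_def by auto
qed

lemma good_sum:
  assumes "finite I" "\<And>i. i \<in> I \<Longrightarrow> good (f i)"
  shows "good (\<lambda>s. \<Sum>i\<in>I. f i s)"
  using assms by (induction I rule: finite_induct) (auto intro: good_add good_zero)

lemma good_lim:
  fixes g :: "nat \<Rightarrow> real \<Rightarrow> real" and f G :: "real \<Rightarrow> real"
  assumes g: "\<And>k. good (g k)" and [measurable]: "f \<in> borel_measurable lborel" "G \<in> borel_measurable lborel"
    and conv: "\<And>s. s \<in> D \<Longrightarrow> (\<lambda>k. g k s) \<longlonglongrightarrow> f s"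
    and GI: "set_integrable lborel D (\<lambda>s. (G s)\<^sup>2)"
    and bnd: "\<And>k s. s \<in> D \<Longrightarrow> \<bar>g k s\<bar> \<le> G s"
  shows "good f"
proof -
  have gm[measurable]: "g k \<in> borel_measurable lborel" for k using g good_def by auto
  have gi: "set_integrable lborel D (\<lambda>s. (g k s)\<^sup>2)" for k using g good_def by auto
  have fG: "\<bar>f s\<bar> \<le> G s" if "s \<in> D" for s
    by (rule LIMSEQ_le_const2[OF tendsto_rabs[OF conv[OF that]]]) (use bnd that in auto)
  have fi: "set_integrable lborel D (\<lambda>s. (f s)\<^sup>2)"
  proof (rule set_integrable_bound[OF GI])
    show "set_borel_measurable lborel D (\<lambda>s. (f s)\<^sup>2)" unfolding set_borel_measurable_def by measurable
    have "(f s)\<^sup>2 \<le> (G s)\<^sup>2" if "s \<in> D" for s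
      by (metis abs_ge_zero fG[OF that] power2_abs power_mono)
    thus "AE x in lborel. x \<in> D \<longrightarrow> norm ((f x)\<^sup>2) \<le> norm ((G x)\<^sup>2)" by auto
  qed
  have gf2: "(g k s - f s)\<^sup>2 \<le> 4 * (G s)\<^sup>2" if "s \<in> D" for k s
  proof -
    have "\<bar>g k s - f s\<bar> \<le> 2 * G s" using bnd[OF that, of k] fG[OF that] by linarith
    hence "\<bar>g k s - f s\<bar>\<^sup>2 \<le> (2 * G s)\<^sup>2" by (intro power_mono) auto
    thus ?thesis by (simp add: power_mult_distrib)
  qed
  have gfi: "set_integrable lborel D (\<lambda>s. (g k s - f s)\<^sup>2)" for k
    using sq_add_int[of "g k" "\<lambda>s. - f s"] gi fi by simp
  have L2: "(\<lambda>k. LINT s:D|lborel. (g k s - f s)\<^sup>2) \<longlonglongrightarrow> 0"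
  proof -
    have lim: "AE x in lborel. (\<lambda>k. indicator D x *\<^sub>R (g k x - f x)\<^sup>2) \<longlonglongrightarrow> 0"
    proof (rule AE_I2)
      fix x show "(\<lambda>k. indicator D x *\<^sub>R (g k x - f x)\<^sup>2) \<longlonglongrightarrow> 0"
      proof (cases "x \<in> D")
        case True
        have "(\<lambda>k. (g k x - f x)\<^sup>2) \<longlonglongrightarrow> (f x - f x)\<^sup>2"
          by (intro tendsto_intros conv True)
        thus ?thesis using True by simp
      qed simp
    qed
    have "integrable lborel (\<lambda>s. 4 * (indicator D s *\<^sub>R (G s)\<^sup>2))"
      using GI unfolding set_integrable_def by auto
    hence wi: "integrable lborel (\<lambda>s. indicator D s *\<^sub>R (4 * (G s)\<^sup>2))"
      by (simp add: algebra_simps)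
    have bd: "AE x in lborel. norm (indicator D x *\<^sub>R (g k x - f x)\<^sup>2) \<le> indicator D x *\<^sub>R (4 * (G x)\<^sup>2)" for k
      using gf2 by (intro AE_I2) (auto simp: indicator_def)
    have "(\<lambda>k. integral\<^sup>L lborel (\<lambda>s. indicator D s *\<^sub>R (g k s - f s)\<^sup>2)) \<longlonglongrightarrow> 0"
      apply (rule integral_dominated_convergence[of "\<lambda>s. 0" lborel "\<lambda>k s. indicator D s *\<^sub>R (g k s - f s)\<^sup>2"
            "\<lambda>s. indicator D s *\<^sub>R (4 * (G s)\<^sup>2)", THEN tendsto_eq_rhs])
      using wi lim bd by auto
    thus ?thesis by (simp add: set_lebesgue_integral_def)
  qed
  have "eventually (\<lambda>n. \<forall>t\<in>D. \<bar>LINT s:{0..t}|lborel. h n s * f s\<bar> \<le> e) sequentially" if e: "e > 0" for e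
  proof -
    define C' where "C' = max C 1"
    have C': "C' > 0" "C \<le> C'" unfolding C'_def by auto
    define lam where "lam = e / (4 * C')"
    have lam: "lam > 0" using e C' by (simp add: lam_def)
    define \<delta> where "\<delta> = e * lam / 2"
    have \<delta>: "\<delta> > 0" using e lam by (simp add: \<delta>_def)
    from order_tendstoD(2)[OF L2 \<delta>] obtain k where k: "(LINT s:D|lborel. (g k s - f s)\<^sup>2) < \<delta>"
      by (auto simp: eventually_sequentially)
    have e2: "e/2 > 0" using e by simp
    have a: "eventually (\<lambda>n. \<forall>t\<in>D. \<bar>LINT s:{0..t}|lborel. h n s * g k s\<bar> \<le> e/2) sequentially"
      using g[of k] e2 unfolding good_def by blast
    show ?thesis
    proof (rule eventually_mono[OF eventually_conj[OF hL2 a]], intro ballI)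
      fix n t assume n: "(set_integrable lborel D (\<lambda>s. (h n s)\<^sup>2) \<and> (LINT s:D|lborel. (h n s)\<^sup>2) \<le> C) \<and>
         (\<forall>t\<in>D. \<bar>LINT s:{0..t}|lborel. h n s * g k s\<bar> \<le> e/2)" and t: "t \<in> D"
      have i1: "set_integrable lborel {0..t} (\<lambda>s. h n s * g k s)" using prod_int n gi t by auto
      have pb: "set_integrable lborel {0..t} (\<lambda>s. h n s * (g k s - f s))"
        "\<bar>LINT s:{0..t}|lborel. h n s * (g k s - f s)\<bar> \<le> (lam * (LINT s:D|lborel. (h n s)\<^sup>2) + (LINT s:D|lborel. (g k s - f s)\<^sup>2) / lam) / 2"
        using prod_bound[of "h n" "\<lambda>s. g k s - f s" D "{0..t}" lam] n gfi Dint[OF t] lam Dsets by auto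
      have "(LINT s:{0..t}|lborel. h n s * f s) = (LINT s:{0..t}|lborel. h n s * g k s - h n s * (g k s - f s))"
        by (simp add: algebra_simps)
      also have "\<dots> = (LINT s:{0..t}|lborel. h n s * g k s) - (LINT s:{0..t}|lborel. h n s * (g k s - f s))"
        using i1 pb(1) by (rule set_integral_diff)
      finally have eq: "(LINT s:{0..t}|lborel. h n s * f s) = (LINT s:{0..t}|lborel. h n s * g k s) - (LINT s:{0..t}|lborel. h n s * (g k s - f s))" .
      have "lam * (LINT s:D|lborel. (h n s)\<^sup>2) \<le> lam * C'"
        using n C' lam by (intro mult_left_mono) auto
      moreover have "(LINT s:D|lborel. (g k s - f s)\<^sup>2) / lam \<le> \<delta> / lam"
        using k lam by (intro divide_right_mono) auto
      moreover have "lam * C' = e / 4" using C' by (simp add: lam_def)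
      moreover have "\<delta> / lam = e / 2" using lam by (simp add: \<delta>_def)
      ultimately have "(lam * (LINT s:D|lborel. (h n s)\<^sup>2) + (LINT s:D|lborel. (g k s - f s)\<^sup>2) / lam) / 2 \<le> (e/4 + e/2) / 2"
        by (intro divide_right_mono add_mono) auto
      moreover have "(e/4 + e/2) / 2 \<le> e / 2" using e by simp
      ultimately have "\<bar>LINT s:{0..t}|lborel. h n s * (g k s - f s)\<bar> \<le> e / 2"
        using pb(2) by (meson order_trans)
      moreover have "\<bar>LINT s:{0..t}|lborel. h n s * g k s\<bar> \<le> e/2" using n t by auto
      ultimately show "\<bar>LINT s:{0..t}|lborel. h n s * f s\<bar> \<le> e" unfolding eq by linarith
    qed
  qed
  then show ?thesis unfolding good_def using fi by auto
qed

lemma h_int: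
  assumes "set_integrable lborel D (\<lambda>s. (h n s)\<^sup>2)" "t \<in> D"
  shows "set_integrable lborel {0..t} (h n)"
proof -
  have a: "set_integrable lborel {0..t} (\<lambda>s. (h n s)\<^sup>2)"
    by (rule set_integrable_subset[OF assms(1) _ Dint[OF assms(2)]]) simp
  have b: "set_integrable lborel {0..t} (\<lambda>s. ((\<lambda>_. 1::real) s)\<^sup>2)"
    unfolding set_integrable_def by (simp add: integrable_indicator_iff emeasure_lborel_Icc_eq)
  show ?thesis using prod_bound(1)[OF hmeas _ a b, of "{0..t}" 1] by simp
qed

lemma good_interval: "good (indicator {a..b})"
proof -
  have ii: "integrable lborel (indicator {a..b} :: real \<Rightarrow> real)" by (simp add: integrable_indicator_iff emeasure_lborel_Icc_eq)
  have si: "set_integrable lborel D (\<lambda>s. (indicator {a..b} s :: real)\<^sup>2)"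
    unfolding set_integrable_def
    by (rule Bochner_Integration.integrable_bound[OF ii]) (auto simp: indicator_def)
  have "eventually (\<lambda>n. \<forall>t\<in>D. \<bar>LINT s:{0..t}|lborel. h n s * indicator {a..b} s\<bar> \<le> e) sequentially"
    if e: "e > 0" for e
  proof -
    have e2: "e/2 > 0" using e by simp
    show ?thesis
    proof (rule eventually_mono[OF eventually_conj[OF hL2 hF[OF e2]]], intro ballI)
      fix n t assume n: "(set_integrable lborel D (\<lambda>s. (h n s)\<^sup>2) \<and> (LINT s:D|lborel. (h n s)\<^sup>2) \<le> C) \<and>
         (\<forall>t\<in>D. \<bar>LINT s:{0..t}|lborel. h n s\<bar> \<le> e/2)" and t: "t \<in> D"
      define u where "u = max 0 a"
      define v where "v = min t b"
      have eq1: "(LINT s:{0..t}|lborel. h n s * indicator {a..b} s) = (LINT s:{u..v}|lborel. h n s)"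
        unfolding set_lebesgue_integral_def u_def v_def
        by (rule Bochner_Integration.integral_cong) (auto simp: indicator_def)
      show "\<bar>LINT s:{0..t}|lborel. h n s * indicator {a..b} s\<bar> \<le> e"
      proof (cases "u \<le> v")
        case False
        thus ?thesis unfolding eq1 using e by (simp add: set_lebesgue_integral_def)
      next
        case True
        have u0: "0 \<le> u" and vt: "v \<le> t" unfolding u_def v_def by auto
        have uD: "u \<in> D" and vD: "v \<in> D" using Dint[OF t] u0 vt True by auto
        have hi: "set_integrable lborel {0..t} (h n)" using h_int n t by auto
        have i0v: "set_integrable lborel {0..v} (h n)"
          by (rule set_integrable_subset[OF hi]) (use vt in auto)
        have i0u: "set_integrable lborel {0..u} (h n)"
          by (rule set_integrable_subset[OF hi]) (use vt True in auto)
        have iuv: "set_integrable lborel {u..v} (h n)"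
          by (rule set_integrable_subset[OF hi]) (use vt u0 in auto)
        have "integral {0..u} (h n) + integral {u..v} (h n) = integral {0..v} (h n)"
          by (rule Henstock_Kurzweil_Integration.integral_combine[OF u0 True set_borel_integral_eq_integral(1)[OF i0v]])
        hence "(LINT s:{u..v}|lborel. h n s) = (LINT s:{0..v}|lborel. h n s) - (LINT s:{0..u}|lborel. h n s)"
          using set_borel_integral_eq_integral(2)[OF i0v] set_borel_integral_eq_integral(2)[OF i0u]
            set_borel_integral_eq_integral(2)[OF iuv] by simp
        moreover have "\<bar>LINT s:{0..v}|lborel. h n s\<bar> \<le> e/2" "\<bar>LINT s:{0..u}|lborel. h n s\<bar> \<le> e/2"
          using n uD vD by auto
        ultimately show ?thesis unfolding eq1 by linarith
      qed
    qed
  qed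
  then show ?thesis unfolding good_def using si by auto
qed

lemma good_borel_set:
  assumes A: "A \<in> sets borel"
  shows "good (indicator (A \<inter> {0..K}))"
proof -
  define G where "G = range (\<lambda>(a,b). {a..b::real})"
  have sb: "sets borel = sigma_sets UNIV G"
    unfolding G_def by (subst borel_eq_atLeastAtMost) (rule sets_measure_of, simp)
  have AS: "A \<in> sigma_sets UNIV G" using A sb by simp
  have IS: "Int_stable G" unfolding Int_stable_def G_def
    by (auto intro!: image_eqI[where x="(max _ _, min _ _)"])
  have Gp: "G \<subseteq> Pow UNIV" by simp
  from IS Gp AS show ?thesis
  proof (induction arbitrary: K rule: sigma_sets_induct_disjoint)
    case (basic A)
    then obtain a b where "A = {a..b}" unfolding G_def by auto
    then show ?case using good_interval by (simp add: Int_atLeastAtMost)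
  next
    case empty
    have "indicator ({} \<inter> {0..K}) = (\<lambda>s::real. 0::real)" by (auto simp: indicator_def)
    then show ?case using good_zero by simp
  next
    case (compl A)
    have "indicator ((UNIV - A) \<inter> {0..K}) = (\<lambda>s::real. indicator {0..K} s + (-1) * indicator (A \<inter> {0..K}) s :: real)"
      by (auto simp: indicator_def)
    moreover have "good (\<lambda>s::real. indicator {0..K} s + (-1) * indicator (A \<inter> {0..K}) s :: real)"
      by (rule good_add[OF good_interval good_scale[OF compl.IH]])
    ultimately show ?case by simp
  next
    case (union A)
    have Ab: "range A \<subseteq> sets borel" using union.hyps(2) sb by simp
    have UAb: "(\<Union>i. A i) \<in> sets borel" using Ab by auto
    have dj: "A i \<inter> {0..K} \<inter> (A j \<inter> {0..K}) = {}" if "i \<noteq> j" for i j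
      using union.hyps(1) that unfolding disjoint_family_on_def by auto
    show ?case
    proof (rule good_lim[where g="\<lambda>k s. \<Sum>i<k. indicator (A i \<inter> {0..K}) s" and G="indicator {0..K}"])
      show "good (\<lambda>s. \<Sum>i<k. indicator (A i \<inter> {0..K}) s)" for k
        by (rule good_sum) (auto intro: union.IH)
      show "indicator ((\<Union>i. A i) \<inter> {0..K}) \<in> borel_measurable lborel"
        using UAb by simp
      show "indicator {0..K} \<in> borel_measurable lborel" by simp
      show "(\<lambda>k. \<Sum>i<k. indicator (A i \<inter> {0..K}) s) \<longlonglongrightarrow> (indicator ((\<Union>i. A i) \<inter> {0..K}) s :: real)" for s
      proof -
        have "(\<lambda>i. indicator (A i \<inter> {0..K}) s::real) sums indicator (\<Union>i. A i \<inter> {0..K}) s"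
          by (rule indicator_sums) (use dj in auto)
        thus ?thesis unfolding sums_def by (simp add: Int_UN_distrib2)
      qed
      show "set_integrable lborel D (\<lambda>s. (indicator {0..K} s :: real)\<^sup>2)"
        using good_interval unfolding good_def by auto
      show "\<bar>\<Sum>i<k. indicator (A i \<inter> {0..K}) s\<bar> \<le> (indicator {0..K} s :: real)" for k s
      proof -
        have "(\<Sum>i<k. indicator (A i \<inter> {0..K}) s) = (indicator (\<Union>i\<in>{..<k}. A i \<inter> {0..K}) s :: real)"
          by (rule indicator_UN_disjoint[symmetric]) (use dj in \<open>auto simp: disjoint_family_on_def\<close>)
        thus ?thesis by (auto simp: indicator_def)
      qed
    qed
  qed
qed

lemma good_trunc:
  assumes [measurable]: "f \<in> borel_measurable lborel" and fi: "set_integrable lborel D (\<lambda>s. (f s)\<^sup>2)"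
  shows "good (\<lambda>s. indicator {0..K} s * f s)"
proof -
  from borel_measurable_implies_sequence_metric[OF assms(1), of 0] obtain F where
    F: "\<And>i. simple_function lborel (F i)" "\<And>x. (\<lambda>i. F i x) \<longlonglongrightarrow> f x"
       "\<And>i x. dist (F i x) 0 \<le> 2 * dist (f x) 0" by auto
  show ?thesis
  proof (rule good_lim[where g="\<lambda>i s. indicator {0..K} s * F i s" and G="\<lambda>s. 2 * \<bar>f s\<bar>"])
    show "good (\<lambda>s. indicator {0..K} s * F i s)" for i
    proof -
      have fin: "finite (F i ` UNIV)" using simple_functionD(1)[OF F(1)[of i]] by simp
      have pre: "F i -` {y} \<in> sets borel" for y using simple_functionD(2)[OF F(1)[of i], of "{y}"] by simp
      have eq: "(\<lambda>s. indicator {0..K} s * F i s) = (\<lambda>s. \<Sum>y\<in>F i ` UNIV. y * indicator (F i -` {y} \<inter> {0..K}) s)"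
      proof
        fix s
        have "F i s = (\<Sum>y\<in>F i ` space lborel. indicator (F i -` {y} \<inter> space lborel) s *\<^sub>R y)"
          by (rule simple_function_indicator_representation_banach[OF F(1)]) simp
        hence "indicator {0..K} s * F i s = (\<Sum>y\<in>F i ` space lborel. indicator {0..K} s * (indicator (F i -` {y} \<inter> space lborel) s *\<^sub>R y))"
          by (simp only: sum_distrib_left)
        also have "\<dots> = (\<Sum>y\<in>F i ` UNIV. y * indicator (F i -` {y} \<inter> {0..K}) s)"
          by (auto intro!: sum.cong simp: indicator_def)
        finally show "indicator {0..K} s * F i s = (\<Sum>y\<in>F i ` UNIV. y * indicator (F i -` {y} \<inter> {0..K}) s)" .
      qed
      show ?thesis unfolding eq
        by (rule good_sum[OF fin]) (rule good_scale[OF good_borel_set[OF pre]])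
    qed
    show "(\<lambda>s. indicator {0..K} s * f s) \<in> borel_measurable lborel" by measurable
    show "(\<lambda>s. 2 * \<bar>f s\<bar>) \<in> borel_measurable lborel" by measurable
    show "(\<lambda>i. indicator {0..K} s * F i s) \<longlonglongrightarrow> indicator {0..K} s * f s" for s
      by (intro tendsto_mult_left F(2))
    show "set_integrable lborel D (\<lambda>s. (2 * \<bar>f s\<bar>)\<^sup>2)"
      using fi by (simp add: power_mult_distrib)
    show "\<bar>indicator {0..K} s * F i s\<bar> \<le> 2 * \<bar>f s\<bar>" for i s
      using F(3)[of i s] by (auto simp: indicator_def abs_mult)
  qed
qed

lemma good_L2:
  assumes [measurable]: "f \<in> borel_measurable lborel" and fi: "set_integrable lborel D (\<lambda>s. (f s)\<^sup>2)"
  shows "good f"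
proof (rule good_lim[where g="\<lambda>k s. indicator {0..real k} s * f s" and G="\<lambda>s. \<bar>f s\<bar>"])
  show "good (\<lambda>s. indicator {0..real k} s * f s)" for k by (rule good_trunc[OF assms])
  show "(\<lambda>s. \<bar>f s\<bar>) \<in> borel_measurable lborel" by measurable
  show "set_integrable lborel D (\<lambda>s. \<bar>f s\<bar>\<^sup>2)" using fi by simp
  show "\<bar>indicator {0..real k} s * f s\<bar> \<le> \<bar>f s\<bar>" for k s by (auto simp: indicator_def)
  show "(\<lambda>k. indicator {0..real k} s * f s) \<longlonglongrightarrow> f s" if s: "s \<in> D" for s
  proof (rule tendsto_eventually)
    have "eventually (\<lambda>k. s \<le> real k) sequentially"
      using filterlim_real_sequentially by (simp add: filterlim_at_top)
    thus "eventually (\<lambda>k. indicator {0..real k} s * f s = f s) sequentially"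
      by eventually_elim (use Dnn[OF s] in \<open>auto simp: indicator_def\<close>)
  qed
qed fact

end

lemma subseq_eventually:
  assumes "\<And>r::nat\<Rightarrow>nat. strict_mono r \<Longrightarrow> \<exists>r'::nat\<Rightarrow>nat. strict_mono r' \<and> eventually (\<lambda>j. P (r (r' j))) sequentially"
  shows "eventually P sequentially"
proof (rule ccontr)
  assume "\<not> eventually P sequentially"
  hence "infinite {n. \<not> P n}" by (simp add: eventually_cofinite[symmetric] cofinite_eq_sequentially)
  then obtain r :: "nat \<Rightarrow> nat" where r: "strict_mono r" "\<And>n. r n \<in> {n. \<not> P n}"
    using infinite_enumerate by blast
  from assms[OF r(1)] obtain r' where "eventually (\<lambda>j. P (r (r' j))) sequentially" by blast
  then obtain j where "P (r (r' j))" by (auto simp: eventually_sequentially)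
  with r(2) show False by auto
qed

lemma L2_of_nn:
  fixes g :: "real \<Rightarrow> real"
  assumes [measurable]: "g \<in> borel_measurable lborel" "A \<in> sets lborel"
    and fin: "(\<integral>\<^sup>+ s\<in>A. ennreal ((g s)\<^sup>2) \<partial>lborel) < \<infinity>"
  shows "set_integrable lborel A (\<lambda>s. (g s)\<^sup>2)"
    "ennreal (LINT s:A|lborel. (g s)\<^sup>2) = (\<integral>\<^sup>+ s\<in>A. ennreal ((g s)\<^sup>2) \<partial>lborel)"
proof -
  have eq: "(\<integral>\<^sup>+ s\<in>A. ennreal ((g s)\<^sup>2) \<partial>lborel) = (\<integral>\<^sup>+ s. ennreal (norm (indicator A s *\<^sub>R (g s)\<^sup>2)) \<partial>lborel)"
    by (rule nn_integral_cong) (auto simp: indicator_def)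
  have eq2: "(\<integral>\<^sup>+ s\<in>A. ennreal ((g s)\<^sup>2) \<partial>lborel) = (\<integral>\<^sup>+ s. ennreal (indicator A s *\<^sub>R (g s)\<^sup>2) \<partial>lborel)"
    by (rule nn_integral_cong) (auto simp: indicator_def)
  show si: "set_integrable lborel A (\<lambda>s. (g s)\<^sup>2)"
    unfolding set_integrable_def by (rule integrableI_bounded) (use fin eq in auto)
  show "ennreal (LINT s:A|lborel. (g s)\<^sup>2) = (\<integral>\<^sup>+ s\<in>A. ennreal ((g s)\<^sup>2) \<partial>lborel)"
    unfolding eq2 set_lebesgue_integral_def
    by (rule nn_integral_eq_integral[symmetric]) (use si in \<open>auto simp: set_integrable_def\<close>)
qed

lemma limsup_bound:
  fixes f :: "nat \<Rightarrow> ennreal"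
  assumes "limsup f < \<infinity>"
  shows "\<exists>C\<ge>0. eventually (\<lambda>n. f n \<le> ennreal C) sequentially"
proof -
  from assms obtain r where r: "r \<ge> 0" "limsup f = ennreal r" by (auto simp: less_top_ennreal)
  have "limsup f < ennreal (r + 1)" using r by (simp add: ennreal_lessI)
  hence "eventually (\<lambda>n. f n < ennreal (r+1)) sequentially" by (rule Limsup_lessD)
  hence "eventually (\<lambda>n. f n \<le> ennreal (r+1)) sequentially" by (auto elim: eventually_mono)
  thus ?thesis using r by (intro exI[of _ "r+1"]) auto
qed

lemma cont_approx:
  fixes \<phi> :: "real \<Rightarrow> real"
  assumes t: "t \<in> time_dom S" "ereal t < S"
    and int: "\<And>T. T \<in> time_dom S \<Longrightarrow> set_integrable lborel {0..T} \<phi>"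
    and big: "e < \<bar>LINT s:{0..t}|lborel. \<phi> s\<bar>"
  shows "\<exists>q\<in>time_dom S. q \<in> \<rat> \<and> e < \<bar>LINT s:{0..q}|lborel. \<phi> s\<bar>"
proof -
  have t0: "0 \<le> t" using t by (auto simp: time_dom_def)
  from ereal_dense2[OF t(2)] obtain T where T: "ereal t < ereal T" "ereal T < S" by blast
  have tT: "t < T" using T by simp
  have TD: "T \<in> time_dom S" using T t0 by (auto simp: time_dom_def)
  have iT: "set_integrable lborel {0..T} \<phi>" using int[OF TD] .
  have eqx: "(LINT s:{0..x}|lborel. \<phi> s) = integral {0..x} \<phi>" if "x \<in> {0..T}" for x
    by (rule set_borel_integral_eq_integral(2)[OF set_integrable_subset[OF iT]]) (use that in auto)
  have cont: "continuous_on {0..T} (\<lambda>x. integral {0..x} \<phi>)"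
    by (rule indefinite_integral_continuous_1[OF set_borel_integral_eq_integral(1)[OF iT]])
  have tin: "t \<in> {0..T}" using t0 tT by auto
  define g where "g x = \<bar>integral {0..x} \<phi>\<bar>" for x
  have gc: "continuous_on {0..T} g" unfolding g_def by (intro continuous_intros cont)
  have gt: "e < g t" using big eqx[OF tin] by (simp add: g_def)
  from gc tin have "\<forall>\<epsilon>>0. \<exists>\<delta>>0. \<forall>x\<in>{0..T}. dist x t < \<delta> \<longrightarrow> dist (g x) (g t) < \<epsilon>"
    unfolding continuous_on_iff by blast
  from this[rule_format, of "g t - e"] gt obtain \<delta> where \<delta>: "\<delta> > 0"
    "\<And>x. x \<in> {0..T} \<Longrightarrow> dist x t < \<delta> \<Longrightarrow> dist (g x) (g t) < g t - e" by auto
  have "t < min (t + \<delta>) T" using \<delta>(1) tT by simp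
  from Rats_dense_in_real[OF this] obtain q where q: "q \<in> \<rat>" "t < q" "q < min (t + \<delta>) T" by blast
  have qin: "q \<in> {0..T}" using q t0 by auto
  have "dist (g q) (g t) < g t - e" using \<delta>(2)[OF qin] q by (simp add: dist_real_def)
  hence "e < g q" by (simp add: dist_real_def)
  moreover have "q \<in> time_dom S" using interval_sub_dom[OF TD] qin by auto
  ultimately show ?thesis using q(1) eqx[OF qin] by (auto simp: g_def)
qed

theorem lemma2p4:
  fixes M :: "'a measure" and S :: ereal
    and \<eta> :: "'a \<Rightarrow> real \<Rightarrow> real" and H :: "nat \<Rightarrow> 'a \<Rightarrow> real \<Rightarrow> real"
  assumes "prob_space M"
    and "S > 0"
    and "(\<lambda>p. \<eta> (fst p) (snd p)) \<in> borel_measurable (M \<Otimes>\<^sub>M lborel)"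
    and "\<And>n. (\<lambda>p. H n (fst p) (snd p)) \<in> borel_measurable (M \<Otimes>\<^sub>M lborel)"
    and "AE \<omega> in M. (\<integral>\<^sup>+ s\<in>time_dom S. ennreal ((\<eta> \<omega> s)\<^sup>2) \<partial>lborel) < \<infinity>"
    and "AE \<omega> in M. limsup (\<lambda>n. \<integral>\<^sup>+ s\<in>time_dom S. ennreal ((H n \<omega> s)\<^sup>2) \<partial>lborel) < \<infinity>"
    and "conv_prob_zero M (\<lambda>n \<omega>. SUP t\<in>time_dom S.
            ereal \<bar>set_lebesgue_integral lborel {0..t} (H n \<omega>)\<bar>)"
  shows "conv_prob_zero M (\<lambda>n \<omega>. SUP t\<in>time_dom S.
            ereal \<bar>set_lebesgue_integral lborel {0..t} (\<lambda>s. H n \<omega> s * \<eta> \<omega> s)\<bar>)"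
proof -
  interpret P: prob_space M by fact
  have Hm[measurable]: "(\<lambda>p. H n (fst p) (snd p)) \<in> borel_measurable (M \<Otimes>\<^sub>M lborel)" for n using assms(4) .
  have etam[measurable]: "(\<lambda>p. \<eta> (fst p) (snd p)) \<in> borel_measurable (M \<Otimes>\<^sub>M lborel)" using assms(3) .
  have Hs: "H n \<omega> \<in> borel_measurable lborel" if "\<omega> \<in> space M" for n \<omega>
    using measurable_Pair2[OF Hm that] by simp
  have etas: "\<eta> \<omega> \<in> borel_measurable lborel" if "\<omega> \<in> space M" for \<omega>
    using measurable_Pair2[OF etam that] by simp
  have dom0: "0 \<in> time_dom S" using assms(2) by (simp add: time_dom_def zero_ereal_def[symmetric] less_imp_le)
  have Dint: "\<And>t. t \<in> time_dom S \<Longrightarrow> {0..t} \<subseteq> time_dom S" by (rule Icc_sub_dom)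
  have Dnn: "\<And>t. t \<in> time_dom S \<Longrightarrow> 0 \<le> t" by (simp add: time_dom_def)
  define X where "X = (\<lambda>n \<omega>. SUP t\<in>time_dom S. ereal \<bar>set_lebesgue_integral lborel {0..t} (\<lambda>s. H n \<omega> s * \<eta> \<omega> s)\<bar>)"
  define Y where "Y = (\<lambda>n \<omega>. SUP t\<in>time_dom S. ereal \<bar>set_lebesgue_integral lborel {0..t} (H n \<omega>)\<bar>)"
  have hY: "conv_prob_zero M Y" using assms(7) unfolding Y_def .
  define L where "L n \<omega> = (\<integral>\<^sup>+ s\<in>time_dom S. ennreal ((H n \<omega> s)\<^sup>2) \<partial>lborel)" for n \<omega>
  define Le where "Le \<omega> = (\<integral>\<^sup>+ s\<in>time_dom S. ennreal ((\<eta> \<omega> s)\<^sup>2) \<partial>lborel)" for \<omega>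
  have Lm: "L n \<in> borel_measurable M" for n
  proof -
    have "(\<lambda>p. ennreal ((H n (fst p) (snd p))\<^sup>2) * indicator (time_dom S) (snd p)) \<in> borel_measurable (M \<Otimes>\<^sub>M lborel)"
      by measurable
    hence "case_prod (\<lambda>\<omega> s. ennreal ((H n \<omega> s)\<^sup>2) * indicator (time_dom S) s) \<in> borel_measurable (M \<Otimes>\<^sub>M lborel)"
      by (simp add: case_prod_beta')
    from lborel.borel_measurable_nn_integral[OF this] show ?thesis unfolding L_def by simp
  qed
  have Lem: "Le \<in> borel_measurable M"
  proof -
    have "(\<lambda>p. ennreal ((\<eta> (fst p) (snd p))\<^sup>2) * indicator (time_dom S) (snd p)) \<in> borel_measurable (M \<Otimes>\<^sub>M lborel)"
      by measurable
    hence "case_prod (\<lambda>\<omega> s. ennreal ((\<eta> \<omega> s)\<^sup>2) * indicator (time_dom S) s) \<in> borel_measurable (M \<Otimes>\<^sub>M lborel)"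
      by (simp add: case_prod_beta')
    from lborel.borel_measurable_nn_integral[OF this] show ?thesis unfolding Le_def by simp
  qed
  define Fm where "Fm n \<omega> t = (LINT s:{0..t}|lborel. H n \<omega> s * \<eta> \<omega> s)" for n \<omega> t
  have Fmm: "(\<lambda>\<omega>. Fm n \<omega> t) \<in> borel_measurable M" for n t
  proof -
    have "(\<lambda>p. indicator {0..t} (snd p) *\<^sub>R (H n (fst p) (snd p) * \<eta> (fst p) (snd p))) \<in> borel_measurable (M \<Otimes>\<^sub>M lborel)"
      by measurable
    hence "case_prod (\<lambda>\<omega> s. indicator {0..t} s *\<^sub>R (H n \<omega> s * \<eta> \<omega> s)) \<in> borel_measurable (M \<Otimes>\<^sub>M lborel)"
      by (simp add: case_prod_beta')
    from lborel.borel_measurable_lebesgue_integral[OF this] show ?thesis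
      unfolding Fm_def set_lebesgue_integral_def by simp
  qed
  define Q where "Q = {t \<in> time_dom S. t \<in> \<rat> \<or> ereal t = S}"
  have Qc: "countable Q"
  proof (rule countable_subset)
    show "Q \<subseteq> \<rat> \<union> {real_of_ereal S}" unfolding Q_def by auto
    show "countable (\<rat> \<union> {real_of_ereal S})" using countable_rat by simp
  qed
  define G where "G n = {\<omega> \<in> space M. L n \<omega> < \<infinity> \<and> Le \<omega> < \<infinity>}" for n
  have Gs: "G n \<in> sets M" for n
    unfolding G_def using Lm[of n] Lem by measurable
  have GL2: "set_integrable lborel (time_dom S) (\<lambda>s. (H n \<omega> s)\<^sup>2) \<and> set_integrable lborel (time_dom S) (\<lambda>s. (\<eta> \<omega> s)\<^sup>2)"
    if "\<omega> \<in> G n" for n \<omega>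
    using that L2_of_nn(1)[OF Hs time_dom_lborel, of \<omega> n S] L2_of_nn(1)[OF etas time_dom_lborel, of \<omega> S]
    unfolding G_def L_def Le_def by auto
  have "conv_prob_zero M X"
    unfolding conv_prob_zero_def
  proof (intro allI impI)
    fix e d :: real assume e: "e > 0" and d: "d > 0"
    define B where "B n = (\<Union>t\<in>Q. {\<omega> \<in> space M. e < \<bar>Fm n \<omega> t\<bar>})" for n
    have Bs: "B n \<in> sets M" for n
      unfolding B_def
      by (rule sets.countable_UN''[OF Qc]) (use Fmm in measurable)
    have cover: "{\<omega>\<in>space M. ereal e < \<bar>X n \<omega>\<bar>} \<subseteq> B n \<union> (space M - G n)" for n
    proof (intro subsetI)
      fix \<omega> assume \<omega>: "\<omega> \<in> {\<omega>\<in>space M. ereal e < \<bar>X n \<omega>\<bar>}"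
      show "\<omega> \<in> B n \<union> (space M - G n)"
      proof (cases "\<omega> \<in> G n")
        case False thus ?thesis using \<omega> by auto
      next
        case True
        have X0: "0 \<le> X n \<omega>" unfolding X_def
          by (rule order_trans[OF _ SUP_upper[OF dom0]]) simp
        hence "ereal e < X n \<omega>" using \<omega> by (simp add: abs_ereal_ge0)
        then obtain t where t: "t \<in> time_dom S" "ereal e < ereal \<bar>Fm n \<omega> t\<bar>"
          unfolding X_def Fm_def by (auto simp: less_SUP_iff)
        have "\<exists>q\<in>Q. e < \<bar>Fm n \<omega> q\<bar>"
        proof (cases "ereal t = S")
          case True thus ?thesis using t unfolding Q_def by auto
        next
          case False
          hence tS: "ereal t < S" using t(1) by (auto simp: time_dom_def)
          have \<omega>s: "\<omega> \<in> space M" using \<omega> by auto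
          have Hn: "H n \<omega> \<in> borel_measurable lborel" using Hs \<omega>s by blast
          have int: "set_integrable lborel {0..T} (\<lambda>s. H n \<omega> s * \<eta> \<omega> s)" if "T \<in> time_dom S" for T
            using prod_bound(1)[OF Hn etas[OF \<omega>s], of "time_dom S" "{0..T}" 1] GL2[OF True] Dint[OF that]
            by simp
          from cont_approx[OF t(1) tS int] t(2) obtain q where "q \<in> time_dom S" "q \<in> \<rat>" "e < \<bar>Fm n \<omega> q\<bar>"
            unfolding Fm_def by auto
          thus ?thesis unfolding Q_def by auto
        qed
        thus ?thesis using \<omega> unfolding B_def by auto
      qed
    qed
    show "eventually (\<lambda>n. \<exists>A\<in>sets M. {\<omega> \<in> space M. ereal e < \<bar>X n \<omega>\<bar>} \<subseteq> A \<and> measure M A < d) sequentially"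
    proof (rule subseq_eventually)
      fix r :: "nat \<Rightarrow> nat" assume r: "strict_mono r"
      have ex: "\<exists>N. \<forall>k\<ge>N. \<exists>A\<in>sets M. {\<omega> \<in> space M. ereal (1 / Suc j) < \<bar>Y (r k) \<omega>\<bar>} \<subseteq> A \<and> measure M A < (1/2)^j" for j
      proof -
        have "eventually (\<lambda>n. \<exists>A\<in>sets M. {\<omega> \<in> space M. ereal (1 / Suc j) < \<bar>Y n \<omega>\<bar>} \<subseteq> A \<and> measure M A < (1/2)^j) sequentially"
          using hY unfolding conv_prob_zero_def by simp
        hence "eventually (\<lambda>k. \<exists>A\<in>sets M. {\<omega> \<in> space M. ereal (1 / Suc j) < \<bar>Y (r k) \<omega>\<bar>} \<subseteq> A \<and> measure M A < (1/2)^j) sequentially"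
          using filterlim_subseq[OF r] unfolding filterlim_iff by blast
        thus ?thesis by (simp add: eventually_sequentially)
      qed
      then obtain N where N: "\<And>j k. k \<ge> N j \<Longrightarrow> \<exists>A\<in>sets M. {\<omega> \<in> space M. ereal (1 / Suc j) < \<bar>Y (r k) \<omega>\<bar>} \<subseteq> A \<and> measure M A < (1/2)^j"
        by metis
      define r' where "r' j = j + (\<Sum>i\<le>j. N i)" for j
      have r': "strict_mono r'" unfolding strict_mono_Suc_iff r'_def by simp
      have Nr': "N j \<le> r' j" for j unfolding r'_def
        by (rule order_trans[OF member_le_sum[of j "{..j}" N]]) auto
      have "\<exists>A. A \<in> sets M \<and> {\<omega> \<in> space M. ereal (1 / Suc j) < \<bar>Y (r (r' j)) \<omega>\<bar>} \<subseteq> A \<and> measure M A < (1/2)^j" for j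
        using N[OF Nr'[of j]] by blast
      then obtain A where A: "\<And>j. A j \<in> sets M"
        "\<And>j. {\<omega> \<in> space M. ereal (1 / Suc j) < \<bar>Y (r (r' j)) \<omega>\<bar>} \<subseteq> A j" "\<And>j. measure M (A j) < (1/2)^j"
        by metis
      define m where "m j = r (r' j)" for j
      have m: "strict_mono m" unfolding m_def using r r' by (simp add: strict_mono_def)
      have summ: "summable (\<lambda>j. measure M (A j))"
        by (rule summable_comparison_test[OF _ summable_geometric[of "1/2"]]) (use A(3) less_imp_le in auto)
      have "AE \<omega> in M. eventually (\<lambda>j. \<omega> \<in> space M - A j) sequentially"
        by (rule borel_cantelli_AE1[OF A(1) _ summ]) (simp add: P.emeasure_eq_measure)
      hence aeY: "AE \<omega> in M. \<forall>e'>0. eventually (\<lambda>j. \<forall>t\<in>time_dom S. \<bar>LINT s:{0..t}|lborel. H (m j) \<omega> s\<bar> \<le> e') sequentially"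
      proof (rule eventually_mono)
        fix \<omega> assume ev: "eventually (\<lambda>j. \<omega> \<in> space M - A j) sequentially"
        show "\<forall>e'>0. eventually (\<lambda>j. \<forall>t\<in>time_dom S. \<bar>LINT s:{0..t}|lborel. H (m j) \<omega> s\<bar> \<le> e') sequentially"
        proof (intro allI impI)
          fix e' :: real assume e': "e' > 0"
          have "eventually (\<lambda>j. inverse (real (Suc j)) < e') sequentially"
            by (rule order_tendstoD(2)[OF LIMSEQ_inverse_real_of_nat e'])
          with ev show "eventually (\<lambda>j. \<forall>t\<in>time_dom S. \<bar>LINT s:{0..t}|lborel. H (m j) \<omega> s\<bar> \<le> e') sequentially"
          proof eventually_elim
            case (elim j)
            hence "\<not> ereal (1 / Suc j) < \<bar>Y (m j) \<omega>\<bar>" using A(2)[of j] unfolding m_def by auto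
            hence Yb: "\<bar>Y (m j) \<omega>\<bar> \<le> ereal (1 / Suc j)" by simp
            show ?case
            proof
              fix t assume t: "t \<in> time_dom S"
              have "ereal \<bar>LINT s:{0..t}|lborel. H (m j) \<omega> s\<bar> \<le> Y (m j) \<omega>"
                unfolding Y_def by (rule SUP_upper[OF t])
              also have "\<dots> \<le> \<bar>Y (m j) \<omega>\<bar>" by (cases "Y (m j) \<omega>") auto
              also have "\<dots> \<le> ereal (1 / Suc j)" by (rule Yb)
              finally have "\<bar>LINT s:{0..t}|lborel. H (m j) \<omega> s\<bar> \<le> 1 / Suc j" by simp
              thus "\<bar>LINT s:{0..t}|lborel. H (m j) \<omega> s\<bar> \<le> e'" using elim by (simp add: inverse_eq_divide)
            qed
          qed
        qed
      qed
      have aeX: "AE \<omega> in M. eventually (\<lambda>j. \<omega> \<in> G (m j) \<and> \<omega> \<notin> B (m j)) sequentially"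
        using aeY assms(5) assms(6) AE_space
      proof (eventually_elim)
        case (elim \<omega>)
        have \<omega>s: "\<omega> \<in> space M" using elim(4) .
        have "limsup (\<lambda>n. L n \<omega>) < \<infinity>" using elim(3) unfolding L_def .
        from limsup_bound[OF this] obtain C where C: "C \<ge> 0" "eventually (\<lambda>n. L n \<omega> \<le> ennreal C) sequentially"
          by blast
        have evC: "eventually (\<lambda>j. L (m j) \<omega> \<le> ennreal C) sequentially"
          using filterlim_subseq[OF m] C(2) unfolding filterlim_iff by blast
        have hL2: "eventually (\<lambda>j. set_integrable lborel (time_dom S) (\<lambda>s. (H (m j) \<omega> s)\<^sup>2) \<and>
            (LINT s:time_dom S|lborel. (H (m j) \<omega> s)\<^sup>2) \<le> C) sequentially"
          using evC
        proof (rule eventually_mono)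
          fix j assume Lj: "L (m j) \<omega> \<le> ennreal C"
          have "L (m j) \<omega> < \<infinity>" using le_less_trans[OF Lj ennreal_less_top] by simp
          hence fin: "(\<integral>\<^sup>+ s\<in>time_dom S. ennreal ((H (m j) \<omega> s)\<^sup>2) \<partial>lborel) < \<infinity>"
            unfolding L_def .
          have Hj: "H (m j) \<omega> \<in> borel_measurable lborel" using Hs \<omega>s by blast
          note l = L2_of_nn[OF Hj time_dom_lborel fin]
          have "ennreal (LINT s:time_dom S|lborel. (H (m j) \<omega> s)\<^sup>2) \<le> ennreal C"
            using l(2) Lj unfolding L_def by simp
          hence "(LINT s:time_dom S|lborel. (H (m j) \<omega> s)\<^sup>2) \<le> C" using C(1) by (simp add: ennreal_le_iff)
          thus "set_integrable lborel (time_dom S) (\<lambda>s. (H (m j) \<omega> s)\<^sup>2) \<and>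
            (LINT s:time_dom S|lborel. (H (m j) \<omega> s)\<^sup>2) \<le> C" using l(1) by simp
        qed
        have etaL2: "set_integrable lborel (time_dom S) (\<lambda>s. (\<eta> \<omega> s)\<^sup>2)"
          using L2_of_nn(1)[OF etas[OF \<omega>s] time_dom_lborel elim(2)] .
        interpret D: dl "time_dom S" "\<lambda>j. H (m j) \<omega>" C
        proof
          show "time_dom S \<in> sets lborel" by simp
          show "\<And>t. t \<in> time_dom S \<Longrightarrow> {0..t} \<subseteq> time_dom S" by (rule Dint)
          show "\<And>t. t \<in> time_dom S \<Longrightarrow> 0 \<le> t" by (rule Dnn)
          show "\<And>n. H (m n) \<omega> \<in> borel_measurable lborel" using Hs \<omega>s by blast
          show "eventually (\<lambda>n. set_integrable lborel (time_dom S) (\<lambda>s. (H (m n) \<omega> s)\<^sup>2) \<and>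
            (LINT s:time_dom S|lborel. (H (m n) \<omega> s)\<^sup>2) \<le> C) sequentially" by (rule hL2)
          show "\<And>e. 0 < e \<Longrightarrow> eventually (\<lambda>n. \<forall>t\<in>time_dom S. \<bar>LINT s:{0..t}|lborel. H (m n) \<omega> s\<bar> \<le> e) sequentially"
            using elim(1) by blast
        qed
        have "D.good (\<eta> \<omega>)" by (rule D.good_L2[OF etas[OF \<omega>s] etaL2])
        moreover have "e/2 > 0" using e by simp
        ultimately have evF: "eventually (\<lambda>j. \<forall>t\<in>time_dom S. \<bar>LINT s:{0..t}|lborel. H (m j) \<omega> s * \<eta> \<omega> s\<bar> \<le> e/2) sequentially"
          unfolding D.good_def by blast
        show ?case
          using evC evF
        proof eventually_elim
          case (elim j)
          have "L (m j) \<omega> < \<infinity>" using le_less_trans[OF elim(1) ennreal_less_top] by simp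
          moreover have "Le \<omega> < \<infinity>" using \<open>(\<integral>\<^sup>+ s\<in>time_dom S. ennreal ((\<eta> \<omega> s)\<^sup>2) \<partial>lborel) < \<infinity>\<close> unfolding Le_def .
          ultimately have "\<omega> \<in> G (m j)" unfolding G_def using \<omega>s by auto
          moreover have "\<omega> \<notin> B (m j)"
          proof
            assume "\<omega> \<in> B (m j)"
            then obtain t where "t \<in> Q" "e < \<bar>Fm (m j) \<omega> t\<bar>" unfolding B_def by auto
            moreover have "t \<in> time_dom S" using \<open>t \<in> Q\<close> unfolding Q_def by auto
            ultimately show False using elim(2) e unfolding Fm_def by force
          qed
          ultimately show ?case by simp
        qed
      qed
      define W where "W J = (\<Union>j\<in>{J..}. B (m j) \<union> (space M - G (m j)))" for J
      have Ws: "W J \<in> sets M" for J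
        unfolding W_def by (rule sets.countable_UN'') (use Bs Gs in auto)
      have Wd: "decseq W" unfolding W_def decseq_def by (intro allI impI UN_mono) auto
      have Wsub: "(\<Inter>J. W J) \<in> null_sets M"
      proof (subst AE_iff_null_sets)
        show "(\<Inter>J. W J) \<in> sets M" using Ws by auto
        show "AE \<omega> in M. \<omega> \<notin> (\<Inter>J. W J)"
          using aeX
        proof (rule eventually_mono)
          fix \<omega> assume "eventually (\<lambda>j. \<omega> \<in> G (m j) \<and> \<omega> \<notin> B (m j)) sequentially"
          then obtain J where "\<And>j. j \<ge> J \<Longrightarrow> \<omega> \<in> G (m j) \<and> \<omega> \<notin> B (m j)" by (auto simp: eventually_sequentially)
          hence "\<omega> \<notin> W J" unfolding W_def by auto
          thus "\<omega> \<notin> (\<Inter>J. W J)" by auto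
        qed
      qed
      have "(\<lambda>J. measure M (W J)) \<longlonglongrightarrow> measure M (\<Inter>J. W J)"
        by (rule P.finite_Lim_measure_decseq) (use Ws Wd in auto)
      moreover have "measure M (\<Inter>J. W J) = 0" using Wsub by (simp add: measure_def null_setsD1)
      ultimately have "eventually (\<lambda>J. measure M (W J) < d) sequentially"
        using order_tendstoD(2)[of _ 0 _ d] d by auto
      hence "eventually (\<lambda>J. \<exists>A\<in>sets M. {\<omega> \<in> space M. ereal e < \<bar>X (r (r' J)) \<omega>\<bar>} \<subseteq> A \<and> measure M A < d) sequentially"
      proof (rule eventually_mono)
        fix J assume "measure M (W J) < d"
        moreover have "{\<omega> \<in> space M. ereal e < \<bar>X (r (r' J)) \<omega>\<bar>} \<subseteq> W J"
          using cover[of "m J"] unfolding W_def m_def by auto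
        ultimately show "\<exists>A\<in>sets M. {\<omega> \<in> space M. ereal e < \<bar>X (r (r' J)) \<omega>\<bar>} \<subseteq> A \<and> measure M A < d"
          using Ws by blast
      qed
      thus "\<exists>r'. strict_mono r' \<and> eventually (\<lambda>j. \<exists>A\<in>sets M. {\<omega> \<in> space M. ereal e < \<bar>X (r (r' j)) \<omega>\<bar>} \<subseteq> A \<and> measure M A < d) sequentially"
        using r' by blast
    qed
  qed
  thus ?thesis unfolding X_def .
qed

end
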